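(* For every positive integer $N$ and all $w_1,w_2\in\mathcal{H}^1$, $\mathsf{F}_N(w_1;t)\,\mathsf{F}_N(w_2;t)=\mathsf{F}_N(w_1\,\overline{*}\,w_2;t)$ in $\mathbb{Q}(t)$.
   Context: $t$ is an indeterminate, $[n]=\{1,\dots,n\}$. An index is a tuple of positive integers. For an index $\boldsymbol{k}=(k_1,\dots,k_r)$ and $A\subset[r]$ let $\overline{S}_{r,N}(A)=\{(n_1,\dots,n_r)\in[N-1]^r: n_{i-1}\le n_i\text{ if }1<i\in[r]\setminus A,\ n_{i-1}<n_i\text{ if }1<i\in A\}$, and \[ F_N(\boldsymbol{k};t)=\sum_{A\subset[r]}(-1)^{\#A}\sum_{(n_1,\dots,n_r)\in\overline{S}_{r,N}(A)}\Bigl(\prod_{i\in A}\frac1{(N-n_i+t)^{k_i}}\Bigr)\Bigl(\prod_{i\in[r]\setminus A}\frac1{n_i^{k_i}}\Bigr). \] $\mathcal{H}=\mathbb{Q}\langle x,y\rangle$, $\mathcal{H}^1=\mathbb{Q}+y\mathcal{H}$, $e_k=yx^{k-1}$; $\mathsf{F}_N\colon\mathcal{H}^1\to\mathbb{Q}(t)$ is $\mathbb{Q}$-linear with $\mathsf{F}_N(1)=1$ and $\mathsf{F}_N(e_{k_1}\cdots e_{k_r})=F_N(\boldsymbol{k};t)$. The star-harmonic product $\overline{*}$ on $\mathcal{H}^1$ is $\mathbb{Q}$-bilinear with $w\,\overline{*}\,1=1\,\overline{*}\,w=w$ and $w_1e_{k_1}\,\overline{*}\,w_2e_{k_2}=(w_1\,\overline{*}\,w_2e_{k_2})e_{k_1}+(w_1e_{k_1}\,\overline{*}\,w_2)e_{k_2}-(w_1\,\overline{*}\,w_2)e_{k_1+k_2}$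 for words $w_1,w_2\in\mathcal{H}^1$. *)

theory Defs
  imports "HOL-Computational_Algebra.Polynomial" "HOL-Computational_Algebra.Fraction_Field"
begin

type_synonym ratfun = "rat poly fract"

definition rf_const :: "rat \<Rightarrow> ratfun" where
  "rf_const c = Fract [:c:] 1"

definition tvar :: ratfun where
  "tvar = Fract [:0, 1:] 1"

text \<open>An index (k_1,...,k_r) is a list of positive integers; it represents the word
  e_{k_1} ... e_{k_r} of H^1 (the empty list represents the word 1).\<close>
definition is_index :: "nat list \<Rightarrow> bool" where
  "is_index ks \<longleftrightarrow> (\<forall>k\<in>set ks. 0 < k)"

text \<open>The set S-bar_{r,N}(A), with positions 0-based: A \<subseteq> {0..<r}, tuples as lists.\<close>
definition Sbar :: "nat \<Rightarrow> nat \<Rightarrow> nat set \<Rightarrow> nat list set" where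
  "Sbar r N A = {ns. length ns = r \<and> (\<forall>i<r. 1 \<le> ns ! i \<and> ns ! i \<le> N - 1) \<and>
      (\<forall>i. 0 < i \<and> i < r \<longrightarrow>
         (i \<notin> A \<longrightarrow> ns ! (i - 1) \<le> ns ! i) \<and> (i \<in> A \<longrightarrow> ns ! (i - 1) < ns ! i))}"

definition F_idx :: "nat \<Rightarrow> nat list \<Rightarrow> ratfun" where
  "F_idx N ks = (let r = length ks in
     \<Sum>A \<in> Pow {0..<r}. (-1) ^ card A *
       (\<Sum>ns \<in> Sbar r N A.
          (\<Prod>i\<in>A. 1 / (of_nat (N - ns ! i) + tvar) ^ (ks ! i)) *
          (\<Prod>i\<in>{0..<r} - A. 1 / (of_nat (ns ! i)) ^ (ks ! i))))"

text \<open>Elements of H^1: finitely supported Q-coefficient functions on indices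
  (coefficients w.r.t. the basis of words e_{k_1}...e_{k_r}).\<close>
definition supp :: "(nat list \<Rightarrow> rat) \<Rightarrow> nat list set" where
  "supp f = {u. f u \<noteq> 0}"

definition H1 :: "(nat list \<Rightarrow> rat) set" where
  "H1 = {f. finite (supp f) \<and> (\<forall>u\<in>supp f. is_index u)}"

definition FN :: "nat \<Rightarrow> (nat list \<Rightarrow> rat) \<Rightarrow> ratfun" where
  "FN N f = (\<Sum>u\<in>supp f. rf_const (f u) * F_idx N u)"

text \<open>Right multiplication by e_k, written on reversed words (so it is a cons).\<close>
definition rcons :: "nat \<Rightarrow> (nat list \<Rightarrow> rat) \<Rightarrow> (nat list \<Rightarrow> rat)" where
  "rcons k f = (\<lambda>u. case u of [] \<Rightarrow> 0 | j # u' \<Rightarrow> if j = k then f u' else 0)"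

text \<open>Star-harmonic product of two words, on reversed words (last letter first).\<close>
fun shr :: "nat list \<Rightarrow> nat list \<Rightarrow> (nat list \<Rightarrow> rat)" where
  "shr [] v = (\<lambda>u. if u = v then 1 else 0)"
| "shr (k # u) [] = (\<lambda>x. if x = k # u then 1 else 0)"
| "shr (k1 # u1) (k2 # u2) =
     (\<lambda>x. rcons k1 (shr u1 (k2 # u2)) x + rcons k2 (shr (k1 # u1) u2) x
          - rcons (k1 + k2) (shr u1 u2) x)"

definition starh_word :: "nat list \<Rightarrow> nat list \<Rightarrow> (nat list \<Rightarrow> rat)" where
  "starh_word a b = (\<lambda>u. shr (rev a) (rev b) (rev u))"

definition starh :: "(nat list \<Rightarrow> rat) \<Rightarrow> (nat list \<Rightarrow> rat) \<Rightarrow> (nat list \<Rightarrow> rat)" where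
  "starh f g = (\<lambda>u. \<Sum>a\<in>supp f. \<Sum>b\<in>supp g. f a * g b * starh_word a b u)"

end

theory Submission
  imports Defs
begin

lemma rf_const_0[simp]: "rf_const 0 = 0"
  by (simp add: rf_const_def Zero_fract_def)
lemma rf_const_1[simp]: "rf_const 1 = 1"
  by (simp add: rf_const_def One_fract_def one_pCons)
lemma rf_const_add: "rf_const (a + b) = rf_const a + rf_const b"
  by (simp add: rf_const_def)
lemma rf_const_diff: "rf_const (a - b) = rf_const a - rf_const b"
  by (simp add: rf_const_def)
lemma rf_const_mult: "rf_const (a * b) = rf_const a * rf_const b"
  by (simp add: rf_const_def mult.commute)
lemma rf_const_sum: "rf_const (sum f S) = (\<Sum>x\<in>S. rf_const (f x))"
  by (induct S rule: infinite_finite_induct) (simp_all add: rf_const_add)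

definition Lin :: "(nat list \<Rightarrow> ratfun) \<Rightarrow> (nat list \<Rightarrow> rat) \<Rightarrow> ratfun" where
  "Lin \<phi> f = (\<Sum>x\<in>supp f. rf_const (f x) * \<phi> x)"

lemma Lin_superset:
  assumes "finite S" "supp f \<subseteq> S"
  shows "Lin \<phi> f = (\<Sum>x\<in>S. rf_const (f x) * \<phi> x)"
  unfolding Lin_def
  by (rule sum.mono_neutral_left) (use assms in \<open>auto simp: supp_def\<close>)

lemma supp_ind: "supp (\<lambda>u. if u = v then 1 else 0) = {v}"
  by (auto simp: supp_def)

lemma supp_rcons: "supp (rcons k f) = (#) k ` supp f"
  unfolding supp_def rcons_def
  apply (rule set_eqI)
  subgoal for x by (cases x) auto
  done

lemma finite_supp_shr: "finite (supp (shr u v))"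
proof (induction u v rule: shr.induct)
  case (3 k1 u1 k2 u2)
  have "supp (shr (k1 # u1) (k2 # u2)) \<subseteq>
     supp (rcons k1 (shr u1 (k2 # u2))) \<union> supp (rcons k2 (shr (k1 # u1) u2)) \<union>
     supp (rcons (k1 + k2) (shr u1 u2))"
    by (auto simp: supp_def)
  then show ?case using 3 by (auto simp: supp_rcons intro: finite_subset)
qed (auto simp: supp_ind)

lemma Lin_add3:
  assumes "finite (supp f)" "finite (supp g)" "finite (supp h)"
  shows "Lin \<phi> (\<lambda>x. f x + g x - h x) = Lin \<phi> f + Lin \<phi> g - Lin \<phi> h"
proof -
  let ?S = "supp f \<union> supp g \<union> supp h"
  have fin: "finite ?S" using assms by auto
  have "Lin \<phi> (\<lambda>x. f x + g x - h x) = (\<Sum>x\<in>?S. rf_const (f x + g x - h x) * \<phi> x)"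
    by (rule Lin_superset[OF fin]) (auto simp: supp_def)
  also have "\<dots> = (\<Sum>x\<in>?S. rf_const (f x) * \<phi> x) + (\<Sum>x\<in>?S. rf_const (g x) * \<phi> x)
       - (\<Sum>x\<in>?S. rf_const (h x) * \<phi> x)"
    by (simp add: rf_const_add rf_const_diff algebra_simps sum.distrib sum_subtractf)
  also have "\<dots> = Lin \<phi> f + Lin \<phi> g - Lin \<phi> h"
    by (subst (1 2 3) Lin_superset[OF fin]) auto
  finally show ?thesis .
qed

lemma Lin_rcons:
  "Lin \<phi> (rcons k f) = Lin (\<lambda>y. \<phi> (k # y)) f"
  unfolding Lin_def supp_rcons
  by (subst sum.reindex) (auto simp: inj_on_def rcons_def)

lemma Lin_phi_add: "Lin (\<lambda>x. \<phi> x + \<psi> x) f = Lin \<phi> f + Lin \<psi> f"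
  by (simp add: Lin_def algebra_simps sum.distrib)

lemma Lin_phi_mult: "Lin (\<lambda>x. c * \<phi> x) f = c * Lin \<phi> f"
  by (simp add: Lin_def algebra_simps sum_distrib_left)

lemma Lin_ind: "Lin \<phi> (\<lambda>u. if u = v then 1 else 0) = \<phi> v"
  by (simp add: Lin_def supp_ind)

definition aa :: "nat \<Rightarrow> nat \<Rightarrow> ratfun" where
  "aa k n = 1 / (of_nat n) ^ k"
definition bb :: "nat \<Rightarrow> nat \<Rightarrow> nat \<Rightarrow> ratfun" where
  "bb N k n = - (1 / (of_nat (N - n) + tvar) ^ k)"

primrec G :: "nat \<Rightarrow> nat list \<Rightarrow> nat \<Rightarrow> ratfun" where
  "G N [] m = 1"
| "G N (k # u) m = (\<Sum>n\<in>{1..m}. aa k n * G N u n + bb N k n * G N u (n - 1))"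

lemma G_0: "G N x 0 = (if x = [] then 1 else 0)"
  by (cases x) auto

lemma G_Suc: "G N (k # u) (Suc m) = G N (k # u) m + aa k (Suc m) * G N u (Suc m) + bb N k (Suc m) * G N u m"
  by (simp add: sum.cl_ivl_Suc)

lemma shr_Nil: "shr u v [] = (if u = [] \<and> v = [] then 1 else 0)"
  by (induction u v rule: shr.induct) (auto simp: rcons_def)

definition LL :: "nat \<Rightarrow> nat \<Rightarrow> (nat list \<Rightarrow> rat) \<Rightarrow> ratfun" where
  "LL N m f = Lin (\<lambda>x. G N x m) f"

lemma LL_rcons_Suc:
  "LL N (Suc m) (rcons k f) = LL N m (rcons k f) + aa k (Suc m) * LL N (Suc m) f + bb N k (Suc m) * LL N m f"
  unfolding LL_def Lin_rcons G_Suc by (simp add: Lin_phi_add Lin_phi_mult)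

lemma aa_add: "aa (k1 + k2) n = aa k1 n * aa k2 n"
  by (simp add: aa_def power_add)
lemma bb_add: "bb N (k1 + k2) n = - (bb N k1 n * bb N k2 n)"
  by (simp add: bb_def power_add)

lemma prod_G: "G N u m * G N v m = LL N m (shr u v)"
proof (induction m arbitrary: u v)
  case 0
  have fin: "finite (insert [] (supp (shr u v)))" by (simp add: finite_supp_shr)
  show ?case unfolding LL_def
    by (subst Lin_superset[OF fin]) (auto simp: G_0 shr_Nil supp_ind if_distrib cong: if_cong)
next
  case (Suc m)
  show ?case
  proof (induction u v rule: shr.induct)
    case (1 v)
    then show ?case by (simp add: LL_def Lin_ind)
  next
    case (2 k u)
    then show ?case by (simp add: LL_def Lin_ind)
  next
    case (3 k1 u1 k2 u2)
    have e: "shr (k1 # u1) (k2 # u2) = (\<lambda>x. rcons k1 (shr u1 (k2 # u2)) x + rcons k2 (shr (k1 # u1) u2) x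
          - rcons (k1 + k2) (shr u1 u2) x)" by simp
    have fins: "finite (supp (rcons k1 (shr u1 (k2 # u2))))" "finite (supp (rcons k2 (shr (k1 # u1) u2)))"
       "finite (supp (rcons (k1 + k2) (shr u1 u2)))"
      by (simp_all add: supp_rcons finite_supp_shr)
    have A: "\<And>m. LL N m (shr (k1 # u1) (k2 # u2)) = LL N m (rcons k1 (shr u1 (k2 # u2))) +
        LL N m (rcons k2 (shr (k1 # u1) u2)) - LL N m (rcons (k1 + k2) (shr u1 u2))"
      unfolding LL_def by (subst e, rule Lin_add3[OF fins])
    have B: "LL N m (rcons k1 (shr u1 (k2 # u2))) +
        LL N m (rcons k2 (shr (k1 # u1) u2)) - LL N m (rcons (k1 + k2) (shr u1 u2))
        = G N (k1 # u1) m * G N (k2 # u2) m"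
      using A[of m] Suc.IH[of "k1 # u1" "k2 # u2"] by simp
    have X1: "LL N m (rcons k1 (shr u1 (k2 # u2))) = G N (k1 # u1) m * G N (k2 # u2) m
        - LL N m (rcons k2 (shr (k1 # u1) u2)) + LL N m (rcons (k1 + k2) (shr u1 u2))"
      using B by (simp add: algebra_simps)
    show ?case
      apply (subst A)
      apply (simp only: LL_rcons_Suc)
      apply (simp only: 3[symmetric] Suc.IH[symmetric] aa_add bb_add X1)
      apply (simp only: G_Suc)
      apply (simp add: algebra_simps)
      done
  qed
qed


definition Sb :: "nat \<Rightarrow> nat \<Rightarrow> nat set \<Rightarrow> nat list set" where
  "Sb r m A = {ns. length ns = r \<and> (\<forall>i<r. 1 \<le> ns ! i \<and> ns ! i \<le> m) \<and>
      (\<forall>i. 0 < i \<and> i < r \<longrightarrow>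
         (i \<notin> A \<longrightarrow> ns ! (i - 1) \<le> ns ! i) \<and> (i \<in> A \<longrightarrow> ns ! (i - 1) < ns ! i))}"

lemma Sbar_Sb: "Sbar r N A = Sb r (N - 1) A"
  by (simp add: Sbar_def Sb_def)

lemma finite_Sb: "finite (Sb r m A)"
proof (rule finite_subset)
  show "Sb r m A \<subseteq> {xs. set xs \<subseteq> {0..m} \<and> length xs = r}"
    by (auto simp: Sb_def in_set_conv_nth)
qed (rule finite_lists_length_eq, simp)

lemma Sb_mono: "ns \<in> Sb r m A \<Longrightarrow> i \<le> j \<Longrightarrow> j < r \<Longrightarrow> ns ! i \<le> ns ! j"
proof (induction j)
  case 0 then show ?case by simp
next
  case (Suc j)
  then show ?case
  proof (cases "i = Suc j")
    case False
    with Suc have "ns ! i \<le> ns ! j" by simp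
    moreover have "ns ! j \<le> ns ! Suc j"
      using Suc.prems unfolding Sb_def
      by (metis (no_types, lifting) diff_Suc_1 less_imp_le mem_Collect_eq zero_less_Suc)
    ultimately show ?thesis by simp
  qed simp
qed

lemma Sb_0: "Sb 0 m A = {[]}"
  by (auto simp: Sb_def)

lemma Sb_snoc:
  assumes "A \<subseteq> {0..<r}"
  shows "Sb (Suc r) m A = (\<lambda>(n, ns). ns @ [n]) ` (SIGMA n:{1..m}. Sb r n A)"
proof (intro set_eqI iffI)
  fix xs assume xs: "xs \<in> Sb (Suc r) m A"
  then have len: "length xs = Suc r" by (simp add: Sb_def)
  define ns where "ns = take r xs"
  define n where "n = xs ! r"
  have xsd: "xs = ns @ [n]" unfolding ns_def n_def using len
    by (metis append_butlast_last_id butlast_conv_take diff_Suc_1 last_conv_nth list.size(3) nat.distinct(1))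
  have ni: "\<And>i. i < r \<Longrightarrow> ns ! i = xs ! i" by (simp add: ns_def)
  have "ns \<in> Sb r n A"
    unfolding Sb_def
  proof (intro CollectI conjI allI impI)
    show "length ns = r" using len by (simp add: ns_def)
    fix i assume i: "i < r"
    show "1 \<le> ns ! i" using xs i ni by (simp add: Sb_def)
    show "ns ! i \<le> n" using Sb_mono[OF xs, of i r] i ni n_def by simp
  next
    fix i assume "0 < i \<and> i < r"
    then show "i \<notin> A \<Longrightarrow> ns ! (i - 1) \<le> ns ! i" "i \<in> A \<Longrightarrow> ns ! (i - 1) < ns ! i"
      using xs ni by (auto simp: Sb_def)
  qed
  moreover have "1 \<le> n \<and> n \<le> m" using xs by (simp add: Sb_def n_def)
  ultimately show "xs \<in> (\<lambda>(n, ns). ns @ [n]) ` (SIGMA n:{1..m}. Sb r n A)"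
    using xsd by force
next
  fix xs assume "xs \<in> (\<lambda>(n, ns). ns @ [n]) ` (SIGMA n:{1..m}. Sb r n A)"
  then obtain n ns where xs: "xs = ns @ [n]" and n: "1 \<le> n" "n \<le> m" and ns: "ns \<in> Sb r n A"
    by auto
  have len: "length ns = r" using ns by (simp add: Sb_def)
  have le: "\<And>i. i < r \<Longrightarrow> ns ! i \<le> n" using ns by (simp add: Sb_def)
  show "xs \<in> Sb (Suc r) m A"
    unfolding Sb_def xs
  proof (intro CollectI conjI allI impI)
    show "length (ns @ [n]) = Suc r" using len by simp
    fix i assume i: "i < Suc r"
    show "1 \<le> (ns @ [n]) ! i" using i n ns len by (auto simp: Sb_def nth_append)
    show "(ns @ [n]) ! i \<le> m" using i n le len by (auto simp: nth_append intro: order.trans)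
  next
    fix i assume i: "0 < i \<and> i < Suc r"
    show "i \<notin> A \<Longrightarrow> (ns @ [n]) ! (i - 1) \<le> (ns @ [n]) ! i"
      using i ns len le by (cases "i = r") (auto simp: Sb_def nth_append)
    show "i \<in> A \<Longrightarrow> (ns @ [n]) ! (i - 1) < (ns @ [n]) ! i"
      using i ns len assms by (cases "i = r") (auto simp: Sb_def nth_append)
  qed
qed

lemma Sb_snoc_ins:
  assumes "A \<subseteq> {0..<r}"
  shows "Sb (Suc r) m (insert r A) = (\<lambda>(n, ns). ns @ [n]) ` (SIGMA n:{1..m}. Sb r (n - 1) A)"
proof (intro set_eqI iffI)
  fix xs assume xs: "xs \<in> Sb (Suc r) m (insert r A)"
  then have len: "length xs = Suc r" by (simp add: Sb_def)
  define ns where "ns = take r xs"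
  define n where "n = xs ! r"
  have xsd: "xs = ns @ [n]" unfolding ns_def n_def using len
    by (metis append_butlast_last_id butlast_conv_take diff_Suc_1 last_conv_nth list.size(3) nat.distinct(1))
  have ni: "\<And>i. i < r \<Longrightarrow> ns ! i = xs ! i" by (simp add: ns_def)
  have last: "0 < r \<Longrightarrow> xs ! (r - 1) < n"
  proof -
    assume "0 < r"
    then show ?thesis using xs unfolding Sb_def n_def by (metis (no_types, lifting) insertI1 lessI mem_Collect_eq)
  qed
  have "ns \<in> Sb r (n - 1) A"
    unfolding Sb_def
  proof (intro CollectI conjI allI impI)
    show "length ns = r" using len by (simp add: ns_def)
    fix i assume i: "i < r"
    show "1 \<le> ns ! i" using xs i ni by (simp add: Sb_def)
    have "xs ! i \<le> xs ! (r - 1)" using Sb_mono[OF xs, of i "r - 1"] i by simp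
    then show "ns ! i \<le> n - 1" using last i ni by simp
  next
    fix i assume "0 < i \<and> i < r"
    then show "i \<notin> A \<Longrightarrow> ns ! (i - 1) \<le> ns ! i" "i \<in> A \<Longrightarrow> ns ! (i - 1) < ns ! i"
      using xs ni by (auto simp: Sb_def)
  qed
  moreover have "1 \<le> n \<and> n \<le> m" using xs by (simp add: Sb_def n_def)
  ultimately show "xs \<in> (\<lambda>(n, ns). ns @ [n]) ` (SIGMA n:{1..m}. Sb r (n - 1) A)"
    using xsd by force
next
  fix xs assume "xs \<in> (\<lambda>(n, ns). ns @ [n]) ` (SIGMA n:{1..m}. Sb r (n - 1) A)"
  then obtain n ns where xs: "xs = ns @ [n]" and n: "1 \<le> n" "n \<le> m" and ns: "ns \<in> Sb r (n - 1) A"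
    by auto
  have len: "length ns = r" using ns by (simp add: Sb_def)
  have le: "\<And>i. i < r \<Longrightarrow> ns ! i < n" using ns n by (auto simp: Sb_def)
  show "xs \<in> Sb (Suc r) m (insert r A)"
    unfolding Sb_def xs
  proof (intro CollectI conjI allI impI)
    show "length (ns @ [n]) = Suc r" using len by simp
    fix i assume i: "i < Suc r"
    show "1 \<le> (ns @ [n]) ! i" using i n ns len by (auto simp: Sb_def nth_append)
    show "(ns @ [n]) ! i \<le> m" using i n le len by (auto simp: nth_append) (meson le_trans less_imp_le_nat)
  next
    fix i assume i: "0 < i \<and> i < Suc r"
    show "i \<notin> insert r A \<Longrightarrow> (ns @ [n]) ! (i - 1) \<le> (ns @ [n]) ! i"
      using i ns len le by (cases "i = r") (auto simp: Sb_def nth_append)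
    show "i \<in> insert r A \<Longrightarrow> (ns @ [n]) ! (i - 1) < (ns @ [n]) ! i"
      using i ns len le assms by (cases "i = r") (auto simp: Sb_def nth_append)
  qed
qed


definition wt :: "nat \<Rightarrow> nat list \<Rightarrow> nat set \<Rightarrow> nat list \<Rightarrow> ratfun" where
  "wt N ks A ns = (\<Prod>i\<in>A. 1 / (of_nat (N - ns ! i) + tvar) ^ (ks ! i)) *
          (\<Prod>i\<in>{0..<length ks} - A. 1 / (of_nat (ns ! i)) ^ (ks ! i))"

definition Q :: "nat \<Rightarrow> nat list \<Rightarrow> nat \<Rightarrow> ratfun" where
  "Q N ks m = (\<Sum>A\<in>Pow {0..<length ks}. (-1) ^ card A * (\<Sum>ns\<in>Sb (length ks) m A. wt N ks A ns))"

lemma F_idx_Q: "F_idx N ks = Q N ks (N - 1)"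
  by (simp add: F_idx_def Q_def wt_def Sbar_Sb Let_def)

lemma inj_snoc: "inj_on (\<lambda>(n, ns). ns @ [n]) X"
  by (auto simp: inj_on_def)

lemma sum_Sb_snoc:
  assumes "A \<subseteq> {0..<r}"
  shows "(\<Sum>xs\<in>Sb (Suc r) m A. f xs) = (\<Sum>n\<in>{1..m}. \<Sum>ns\<in>Sb r n A. f (ns @ [n]))"
  unfolding Sb_snoc[OF assms]
  by (subst sum.reindex[OF inj_snoc]) (simp add: sum.Sigma finite_Sb split_def)

lemma sum_Sb_snoc_ins:
  assumes "A \<subseteq> {0..<r}"
  shows "(\<Sum>xs\<in>Sb (Suc r) m (insert r A). f xs) = (\<Sum>n\<in>{1..m}. \<Sum>ns\<in>Sb r (n - 1) A. f (ns @ [n]))"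
  unfolding Sb_snoc_ins[OF assms]
  by (subst sum.reindex[OF inj_snoc]) (simp add: sum.Sigma finite_Sb split_def)

lemma wt_snoc:
  assumes "A \<subseteq> {0..<length ks}" "length ns = length ks"
  shows "wt N (ks @ [k]) A (ns @ [n]) = wt N ks A ns * aa k n"
proof -
  let ?r = "length ks"
  have d: "{0..<length (ks @ [k])} - A = insert ?r ({0..<?r} - A)" using assms(1) by auto
  have p1: "(\<Prod>i\<in>A. 1 / (of_nat (N - (ns @ [n]) ! i) + tvar) ^ ((ks @ [k]) ! i)) =
     (\<Prod>i\<in>A. 1 / (of_nat (N - ns ! i) + tvar) ^ (ks ! i))"
    by (rule prod.cong) (use assms in \<open>auto simp: nth_append\<close>)
  have p2: "(\<Prod>i\<in>{0..<?r} - A. 1 / (of_nat ((ns @ [n]) ! i)) ^ ((ks @ [k]) ! i)) =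
     (\<Prod>i\<in>{0..<?r} - A. 1 / (of_nat (ns ! i)) ^ (ks ! i))"
    by (rule prod.cong) (use assms in \<open>auto simp: nth_append\<close>)
  show ?thesis unfolding wt_def d
    by (subst prod.insert) (use assms p1 p2 in \<open>auto simp: aa_def nth_append\<close>)
qed

lemma wt_snoc_ins:
  assumes "A \<subseteq> {0..<length ks}" "length ns = length ks"
  shows "wt N (ks @ [k]) (insert (length ks) A) (ns @ [n]) = wt N ks A ns * (1 / (of_nat (N - n) + tvar) ^ k)"
proof -
  let ?r = "length ks"
  have d: "{0..<length (ks @ [k])} - insert ?r A = {0..<?r} - A" using assms(1) by auto
  have p1: "(\<Prod>i\<in>A. 1 / (of_nat (N - (ns @ [n]) ! i) + tvar) ^ ((ks @ [k]) ! i)) =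
     (\<Prod>i\<in>A. 1 / (of_nat (N - ns ! i) + tvar) ^ (ks ! i))"
    by (rule prod.cong) (use assms in \<open>auto simp: nth_append\<close>)
  have p2: "(\<Prod>i\<in>{0..<?r} - A. 1 / (of_nat ((ns @ [n]) ! i)) ^ ((ks @ [k]) ! i)) =
     (\<Prod>i\<in>{0..<?r} - A. 1 / (of_nat (ns ! i)) ^ (ks ! i))"
    by (rule prod.cong) (use assms in \<open>auto simp: nth_append\<close>)
  have fA: "finite A" "?r \<notin> A" using assms(1) finite_subset by auto
  show ?thesis unfolding wt_def d
    by (subst prod.insert[OF fA]) (use assms p1 p2 in \<open>auto simp: nth_append\<close>)
qed

lemma Q_snoc: "Q N (ks @ [k]) m = (\<Sum>n\<in>{1..m}. aa k n * Q N ks n + bb N k n * Q N ks (n - 1))"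
proof -
  let ?r = "length ks"
  let ?P = "Pow {0..<?r}"
  define T where "T A = (-1) ^ card A * (\<Sum>xs\<in>Sb (Suc ?r) m A. wt N (ks @ [k]) A xs)" for A
  have "Q N (ks @ [k]) m = (\<Sum>A\<in>Pow (insert ?r {0..<?r}). T A)"
    unfolding Q_def T_def length_append_singleton atLeast0_lessThan_Suc by (rule refl)
  also have "\<dots> = (\<Sum>A\<in>?P. T A) + (\<Sum>A\<in>?P. T (insert ?r A))"
  proof -
    have inj: "inj_on (insert ?r) ?P"
    proof (rule inj_onI)
      fix X Y assume X: "X \<in> ?P" and Y: "Y \<in> ?P" and e: "insert ?r X = insert ?r Y"
      have "?r \<notin> X" "?r \<notin> Y" using X Y by auto
      then show "X = Y" using e by (metis Diff_insert_absorb)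
    qed
    have disj: "?P \<inter> insert ?r ` ?P = {}" by auto
    have R: "(\<Sum>A\<in>insert ?r ` ?P. T A) = (\<Sum>A\<in>?P. T (insert ?r A))"
      by (subst sum.reindex[OF inj]) (simp only: o_def)
    have U: "(\<Sum>A\<in>?P \<union> insert ?r ` ?P. T A) = (\<Sum>A\<in>?P. T A) + (\<Sum>A\<in>insert ?r ` ?P. T A)"
      by (rule sum.union_disjoint[OF _ _ disj]) auto
    show ?thesis unfolding Pow_insert U R by (rule refl)
  qed
  also have "\<dots> = (\<Sum>A\<in>?P. \<Sum>n\<in>{1..m}. aa k n * ((-1) ^ card A * (\<Sum>ns\<in>Sb ?r n A. wt N ks A ns)))
     + (\<Sum>A\<in>?P. \<Sum>n\<in>{1..m}. bb N k n * ((-1) ^ card A * (\<Sum>ns\<in>Sb ?r (n - 1) A. wt N ks A ns)))"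
  proof (intro arg_cong2[where f="(+)"] sum.cong refl)
    fix A assume A: "A \<in> ?P"
    then have As: "A \<subseteq> {0..<?r}" by auto
    have len: "\<And>n ns. ns \<in> Sb ?r n A \<Longrightarrow> length ns = ?r" by (simp add: Sb_def)
    show "T A = (\<Sum>n\<in>{1..m}. aa k n * ((-1) ^ card A * (\<Sum>ns\<in>Sb ?r n A. wt N ks A ns)))"
      unfolding T_def sum_Sb_snoc[OF As] sum_distrib_left
      apply (intro sum.cong refl)
      apply (subst wt_snoc[OF As])
       apply (auto simp: Sb_def)
      done
    have c: "card (insert ?r A) = Suc (card A)" 
    proof -
      have "finite A" using As finite_subset by blast
      moreover have "?r \<notin> A" using As by auto
      ultimately show ?thesis by simp
    qed
    show "T (insert ?r A) = (\<Sum>n\<in>{1..m}. bb N k n * ((-1) ^ card A * (\<Sum>ns\<in>Sb ?r (n - 1) A. wt N ks A ns)))"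
      unfolding T_def sum_Sb_snoc_ins[OF As] sum_distrib_left c
      apply (intro sum.cong refl)
      apply (subst wt_snoc_ins[OF As])
       apply (auto simp: Sb_def bb_def)
      done
  qed
  also have "\<dots> = (\<Sum>n\<in>{1..m}. aa k n * Q N ks n + bb N k n * Q N ks (n - 1))"
    unfolding Q_def length_append_singleton sum.distrib
    by (rule arg_cong2[where f="(+)"]; subst sum.swap; simp only: sum_distrib_left)
  finally show ?thesis .
qed

lemma Q_G: "Q N ks m = G N (rev ks) m"
proof (induction ks arbitrary: m rule: rev_induct)
  case Nil
  then show ?case by (simp add: Q_def Sb_0 wt_def)
next
  case (snoc k ks)
  then show ?case by (simp add: Q_snoc)
qed


lemma supp_starh_word: "supp (starh_word a b) = rev ` supp (shr (rev a) (rev b))"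
  unfolding supp_def starh_word_def
  by (auto simp: image_iff) (metis rev_rev_ident)

lemma finite_supp_starh_word: "finite (supp (starh_word a b))"
  by (simp add: supp_starh_word finite_supp_shr)

lemma F_idx_G: "F_idx N a = G N (rev a) (N - 1)"
  by (simp add: F_idx_Q Q_G)

lemma word_prod: "F_idx N a * F_idx N b = Lin (F_idx N) (starh_word a b)"
proof -
  have "F_idx N a * F_idx N b = LL N (N - 1) (shr (rev a) (rev b))"
    by (simp add: F_idx_G prod_G)
  also have "\<dots> = Lin (F_idx N) (starh_word a b)"
    unfolding LL_def Lin_def supp_starh_word
    by (subst sum.reindex) (auto simp: inj_on_def F_idx_G starh_word_def)
  finally show ?thesis .
qed

lemma Lin_sum:
  assumes "finite I" "\<And>i. i \<in> I \<Longrightarrow> finite (supp (f i))"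
  shows "Lin \<phi> (\<lambda>u. \<Sum>i\<in>I. f i u) = (\<Sum>i\<in>I. Lin \<phi> (f i))"
proof -
  let ?S = "\<Union>i\<in>I. supp (f i)"
  have fin: "finite ?S" using assms by auto
  have sub: "supp (\<lambda>u. \<Sum>i\<in>I. f i u) \<subseteq> ?S"
    unfolding supp_def by (auto elim: sum.not_neutral_contains_not_neutral)
  have "Lin \<phi> (\<lambda>u. \<Sum>i\<in>I. f i u) = (\<Sum>u\<in>?S. rf_const (\<Sum>i\<in>I. f i u) * \<phi> u)"
    by (rule Lin_superset[OF fin sub])
  also have "\<dots> = (\<Sum>u\<in>?S. \<Sum>i\<in>I. rf_const (f i u) * \<phi> u)"
    by (simp add: rf_const_sum sum_distrib_right)
  also have "\<dots> = (\<Sum>i\<in>I. \<Sum>u\<in>?S. rf_const (f i u) * \<phi> u)"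
    by (rule sum.swap)
  also have "\<dots> = (\<Sum>i\<in>I. Lin \<phi> (f i))"
    by (intro sum.cong refl, rule Lin_superset[symmetric, OF fin]) auto
  finally show ?thesis .
qed

lemma Lin_scale: "Lin \<phi> (\<lambda>u. c * f u) = rf_const c * Lin \<phi> f"
proof (cases "c = 0")
  case True
  then show ?thesis by (simp add: Lin_def supp_def)
next
  case False
  then have "supp (\<lambda>u. c * f u) = supp f" by (auto simp: supp_def)
  then show ?thesis using False
    by (simp add: Lin_def rf_const_mult sum_distrib_left mult.assoc)
qed

theorem mainTheorem14:
  fixes N :: nat and w1 w2 :: "nat list \<Rightarrow> rat"
  assumes "0 < N" and "w1 \<in> H1" and "w2 \<in> H1"
  shows "FN N w1 * FN N w2 = FN N (starh w1 w2)"
proof -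
  have f1: "finite (supp w1)" and f2: "finite (supp w2)" using assms by (auto simp: H1_def)
  let ?I = "supp w1 \<times> supp w2"
  have FN_Lin: "\<And>f. FN N f = Lin (F_idx N) f" by (simp add: FN_def Lin_def)
  have "starh w1 w2 = (\<lambda>u. \<Sum>p\<in>?I. w1 (fst p) * w2 (snd p) * starh_word (fst p) (snd p) u)"
    unfolding starh_def by (simp add: sum.cartesian_product split_def)
  then have "FN N (starh w1 w2) = (\<Sum>p\<in>?I. Lin (F_idx N) (\<lambda>u. w1 (fst p) * w2 (snd p) * starh_word (fst p) (snd p) u))"
    unfolding FN_Lin
    by (simp only:) (rule Lin_sum, use f1 f2 in auto,
        rule finite_subset[OF _ finite_supp_starh_word], auto simp: supp_def)
  also have "\<dots> = (\<Sum>p\<in>?I. rf_const (w1 (fst p)) * rf_const (w2 (snd p)) * (F_idx N (fst p) * F_idx N (snd p)))"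
    by (simp add: Lin_scale word_prod rf_const_mult)
  also have "\<dots> = FN N w1 * FN N w2"
    unfolding FN_def sum_product sum.cartesian_product
    by (intro sum.cong refl) (auto simp: algebra_simps)
  finally show ?thesis by simp
qed

end
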